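(* For every integer $n\ge1$ and every $\eta>0$, $$\sup_{0\ne f\in\mathcal{T}_n(\eta)}\frac{|f'(0)|}{\|f\|_{L_2[0,1]}} \ge (1+\varepsilon_n)\,3^{-1/2}\,n^3,$$ where $1+\varepsilon_n := 3^{1/2}n^{-3}\left(\sum_{k=0}^{n-1}k^2(k+1)^2(2k+1)\right)^{1/2}$ (so $\varepsilon_n\to0$ as $n\to\infty$).
   Context: For $\eta>0$, $\mathcal{T}_n(\eta)$ denotes the set of all functions $f(t)=\sum_{j=1}^na_je^{i\lambda_jt}$ with $a_j\in\mathbb{C}$ and real $0<\lambda_1<\lambda_2<\cdots<\lambda_n<\eta$. $\|f\|_{L_2[0,1]}=(\int_0^1|f|^2)^{1/2}$. *)

theory Defs
  imports "HOL-Analysis.Analysis"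
begin

definition expsum :: "nat \<Rightarrow> (nat \<Rightarrow> complex) \<Rightarrow> (nat \<Rightarrow> real) \<Rightarrow> real \<Rightarrow> complex" where
  "expsum n a lam t = (\<Sum>j<n. a j * exp (\<i> * complex_of_real (lam j * t)))"

definition Tn :: "nat \<Rightarrow> real \<Rightarrow> (real \<Rightarrow> complex) set" where
  "Tn n \<eta> = {f. \<exists>a lam. strict_mono_on {..<n} lam \<and> (\<forall>j<n. 0 < lam j \<and> lam j < \<eta>)
                        \<and> f = expsum n a lam}"

definition L2norm01 :: "(real \<Rightarrow> complex) \<Rightarrow> real" where
  "L2norm01 f = sqrt (integral {0..1} (\<lambda>t. (cmod (f t))\<^sup>2))"

definition eps_n :: "nat \<Rightarrow> real" where
  "eps_n n = sqrt 3 * real n powr (-3)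
     * sqrt (\<Sum>k<n. real k ^ 2 * real (k + 1) ^ 2 * real (2 * k + 1)) - 1"

end

theory Submission imports Defs "HOL-Computational_Algebra.Polynomial" "HOL-Probability.Characteristic_Functions" begin

lemma mono_int: "((\<lambda>t::real. t^i) has_integral (1/(real i+1))) {0..1}"
proof -
  have "((\<lambda>t::real. t^i) has_integral ((1::real)^(Suc i)/(real i+1) - 0^(Suc i)/(real i+1))) {0..1}"
    apply (rule fundamental_theorem_of_calculus)
     apply simp
    apply (rule has_real_derivative_iff_has_vector_derivative[THEN iffD1])
    apply (rule derivative_eq_intros refl | simp)+
    apply (simp add: field_simps)
    done
  then show ?thesis by simp
qed

lemma prod_shift: "(\<Prod>i\<in>{1..k}. real m + real i) = fact (m+k) / fact m"
proof (induction k)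
  case 0 then show ?case by simp
next
  case (Suc k)
  have "(\<Prod>i\<in>{1..Suc k}. real m + real i) = (\<Prod>i\<in>{1..k}. real m + real i) * (real m + real (Suc k))"
    by (subst prod.cl_ivl_Suc) simp
  also have "\<dots> = fact (m+k) / fact m * real (Suc (m+k))" using Suc by simp
  also have "\<dots> = fact (m + Suc k) / fact m" by (simp add: algebra_simps)
  finally show ?case .
qed

lemma prod_below: "(\<Prod>l\<in>{..<m}. real l - real m) = (-1)^m * fact m"
proof (induction m)
  case 0 then show ?case by simp
next
  case (Suc m)
  have "(\<Prod>l\<in>{..<Suc m}. real l - real (Suc m)) = (real 0 - real (Suc m)) * (\<Prod>l\<in>{..<m}. real (Suc l) - real (Suc m))"
    by (rule prod.lessThan_Suc_shift)
  also have "(\<Prod>l\<in>{..<m}. real (Suc l) - real (Suc m)) = (\<Prod>l\<in>{..<m}. real l - real m)"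
    by (intro prod.cong) auto
  finally show ?case using Suc by (simp add: algebra_simps)
qed

lemma prod_above: "m \<le> k \<Longrightarrow> (\<Prod>l\<in>{m<..k}. real l - real m) = fact (k - m)"
proof (induction k)
  case 0 then show ?case by simp
next
  case (Suc k)
  show ?case
  proof (cases "m = Suc k")
    case True then show ?thesis by simp
  next
    case False
    then have "m \<le> k" using Suc by simp
    have "{m<..Suc k} = insert (Suc k) {m<..k}" using \<open>m \<le> k\<close> by auto
    then have "(\<Prod>l\<in>{m<..Suc k}. real l - real m) = (real (Suc k) - real m) * (\<Prod>l\<in>{m<..k}. real l - real m)"
      by simp
    also have "\<dots> = real (Suc (k - m)) * fact (k - m)" using Suc.IH[OF \<open>m \<le> k\<close>] \<open>m \<le> k\<close>
      by (simp add: of_nat_diff)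
    also have "\<dots> = fact (Suc (k - m))" by (simp only: fact_Suc of_nat_mult)
    also have "Suc (k - m) = Suc k - m" using \<open>m \<le> k\<close> by simp
    finally show ?thesis .
  qed
qed

lemma prod_skip: "m \<le> k \<Longrightarrow> (\<Prod>l\<in>{..k}-{m}. real l - real m) = (-1)^m * fact m * fact (k-m)"
proof -
  assume "m \<le> k"
  have e: "{..k}-{m} = {..<m} \<union> {m<..k}" using \<open>m \<le> k\<close> by auto
  have "(\<Prod>l\<in>{..k}-{m}. real l - real m) = (\<Prod>l\<in>{..<m} \<union> {m<..k}. real l - real m)"
    by (simp only: e)
  also have "\<dots> = (\<Prod>l\<in>{..<m}. real l - real m) * (\<Prod>l\<in>{m<..k}. real l - real m)"
    by (rule prod.union_disjoint) auto
  finally have "(\<Prod>l\<in>{..k}-{m}. real l - real m) = (\<Prod>l\<in>{..<m}. real l - real m) * (\<Prod>l\<in>{m<..k}. real l - real m)" .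
  then
  show ?thesis using prod_below[of m] prod_above[OF \<open>m \<le> k\<close>] by simp
qed

lemma coef_ident: "m \<le> k \<Longrightarrow> real (k choose m) * real ((k+m) choose m) * (fact m * fact (k-m)) = fact (m+k) / fact m"
proof -
  assume mk: "m \<le> k"
  have a: "real (k choose m) = fact k / (fact m * fact (k-m))" by (rule binomial_fact[OF mk])
  have b: "real ((k+m) choose m) = fact (k+m) / (fact m * fact k)" using binomial_fact[of m "k+m"] by simp
  show ?thesis unfolding a b by (simp add: field_simps add.commute)
qed

lemma interp:
  fixes x :: real
  shows "(\<Sum>i\<le>k. (-1)^i * real (k choose i) * real ((k+i) choose i) * (\<Prod>l\<in>{..k}-{i}. x + real l))
         = (-1)^k * (\<Prod>i\<in>{1..k}. x - real i)"
proof -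
  define p :: "real poly" where "p = (\<Sum>i\<le>k. smult ((-1)^i * real (k choose i) * real ((k+i) choose i)) (\<Prod>l\<in>{..k}-{i}. [:real l, 1:]))"
  define q :: "real poly" where "q = smult ((-1)^k) (\<Prod>i\<in>{1..k}. [:- real i, 1:])"
  have px: "poly p y = (\<Sum>i\<le>k. (-1)^i * real (k choose i) * real ((k+i) choose i) * (\<Prod>l\<in>{..k}-{i}. y + real l))" for y
    by (simp add: p_def poly_sum poly_prod add.commute)
  have qx: "poly q y = (-1)^k * (\<Prod>i\<in>{1..k}. y - real i)" for y
    by (simp add: q_def poly_prod)
  have dp: "degree p \<le> k"
    unfolding p_def
  proof (rule degree_sum_le)
    fix i assume "i \<in> {..k}"
    have "degree (\<Prod>l\<in>{..k}-{i}. [:real l, 1:]) \<le> (\<Sum>l\<in>{..k}-{i}. degree [:real l, 1:])"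
      using degree_prod_sum_le[of "{..k}-{i}" "\<lambda>l. [:real l, 1:]"] by (simp add: o_def)
    also have "\<dots> = card ({..k}-{i})" by simp
    also have "\<dots> \<le> k" using \<open>i \<in> {..k}\<close> by simp
    finally show "degree (smult ((-1)^i * real (k choose i) * real ((k+i) choose i)) (\<Prod>l\<in>{..k}-{i}. [:real l, 1:])) \<le> k"
      using degree_smult_le order_trans by blast
  qed simp
  have dq: "degree q \<le> k"
  proof -
    have "degree (\<Prod>i\<in>{1..k}. [:- real i, 1:]) \<le> (\<Sum>i\<in>{1..k}. degree [:- real i, 1:])"
      using degree_prod_sum_le[of "{1..k}" "\<lambda>i. [:- real i, 1:]"] by (simp add: o_def)
    also have "\<dots> = k" by simp
    finally show ?thesis unfolding q_def using degree_smult_le order_trans by blast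
  qed
  define A where "A = (\<lambda>m. - real m) ` {..k}"
  have cA: "card A = Suc k" unfolding A_def
    by (subst card_image) (auto simp: inj_on_def)
  have "p = q"
  proof (rule poly_eqI_degree[of A])
    fix y assume "y \<in> A"
    then obtain m where m: "m \<le> k" "y = - real m" unfolding A_def by auto
    have z: "(\<Prod>l\<in>{..k}-{i}. y + real l) = 0" if "i \<le> k" "i \<noteq> m" for i
      using m that by (intro prod_zero bexI[of _ m]) auto
    have "poly p y = (-1)^m * real (k choose m) * real ((k+m) choose m) * (\<Prod>l\<in>{..k}-{m}. y + real l)"
      unfolding px using m z by (subst sum.remove[of _ m]) (auto intro!: sum.neutral)
    also have "(\<Prod>l\<in>{..k}-{m}. y + real l) = (\<Prod>l\<in>{..k}-{m}. real l - real m)"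
      using m by simp
    also have "\<dots> = (-1)^m * fact m * fact (k-m)" by (rule prod_skip[OF m(1)])
    also have "(-1)^m * real (k choose m) * real ((k+m) choose m) * ((-1)^m * fact m * fact (k-m))
       = ((-1)^m * (-1)^m) * (real (k choose m) * real ((k+m) choose m) * (fact m * fact (k-m)))" by simp
    also have "\<dots> = fact (m+k) / fact m" using coef_ident[OF m(1)] by (simp add: power_mult_distrib[symmetric])
    finally have 1: "poly p y = fact (m+k) / fact m" .
    have "poly q y = (-1)^k * (\<Prod>i\<in>{1..k}. - (real m + real i))" unfolding qx using m by (simp add: algebra_simps, intro prod.cong) auto
    also have "\<dots> = (-1)^k * ((-1)^k * (\<Prod>i\<in>{1..k}. real m + real i))" by (subst prod_uminus) simp
    also have "\<dots> = fact (m+k) / fact m" using prod_shift[of m k] by (simp add: power_mult_distrib[symmetric])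
    finally show "poly p y = poly q y" using 1 by simp
  qed (use cA dp dq in auto)
  then show ?thesis using px qx by metis
qed


lemma rev_fact: "(\<Prod>i\<in>{1..k}. real (k+1) - real i) = fact k"
proof -
  have "(\<Prod>i\<in>{1..k}. real (k+1) - real i) = (\<Prod>i\<in>{1..k}. real i)"
  proof (rule prod.reindex_bij_witness[where i="\<lambda>i. k+1-i" and j="\<lambda>i. k+1-i"])
    fix a assume a: "a \<in> {1..k}"
    then have "a \<le> k+1" by simp
    then show "real (k + 1 - a) = real (k+1) - real a" by (rule of_nat_diff)
  qed auto
  then show ?thesis by (simp add: fact_prod)
qed

lemma Dval: "(\<Prod>l\<in>{..k}. real (k+1) + real l) = fact (2*k+1) / fact k"
proof -
  have "(\<Prod>l\<in>{..k}. real (k+1) + real l) = (\<Prod>i\<in>{1..k+1}. real k + real i)"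
    by (rule prod.reindex_bij_witness[where i="\<lambda>i. i - 1" and j="\<lambda>l. l+1"]; simp; linarith)
  also have "\<dots> = fact (k + (k+1)) / fact k" by (rule prod_shift)
  also have "k + (k+1) = 2*k+1" by simp
  finally show ?thesis .
qed

definition qc :: "nat \<Rightarrow> nat \<Rightarrow> real" where
  "qc k i = (-1)^(k+i) * real (k choose i) * real ((k+i) choose i)"

lemma frac:
  assumes "j \<le> k"
  shows "(\<Sum>i\<le>k. qc k i / (real i + real j + 1)) = (if j < k then 0 else fact k ^ 2 / fact (2*k+1))"
proof -
  define x where "x = real j + 1"
  have x0: "x > 0" unfolding x_def by simp
  define D where "D = (\<Prod>l\<in>{..k}. x + real l)"
  have D0: "D > 0" unfolding D_def using x0 by (intro prod_pos) auto
  have rem: "(\<Prod>l\<in>{..k}-{i}. x + real l) / D = 1 / (x + real i)" if "i \<le> k" for i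
  proof -
    have "D = (x + real i) * (\<Prod>l\<in>{..k}-{i}. x + real l)" unfolding D_def
      using that by (subst prod.remove[of _ i]) auto
    moreover have "x + real i > 0" using x0 by simp
    ultimately show ?thesis using D0 by (simp add: field_simps)
  qed
  have "(\<Sum>i\<le>k. qc k i / (real i + real j + 1))
      = (-1)^k * ((\<Sum>i\<le>k. (-1)^i * real (k choose i) * real ((k+i) choose i) * (\<Prod>l\<in>{..k}-{i}. x + real l)) / D)"
    unfolding sum_divide_distrib sum_distrib_left
  proof (rule sum.cong[OF refl])
    fix i assume ik: "i \<in> {..k}"
    show "qc k i / (real i + real j + 1) = (-1)^k * ((-1)^i * real (k choose i) * real ((k+i) choose i) * (\<Prod>l\<in>{..k}-{i}. x + real l) / D)"
    proof -
      let ?c = "(-1)^i * real (k choose i) * real ((k+i) choose i)"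
      have "?c * (\<Prod>l\<in>{..k}-{i}. x + real l) / D = ?c * ((\<Prod>l\<in>{..k}-{i}. x + real l) / D)" by simp
      also have "\<dots> = ?c / (real i + real j + 1)" using rem[of i] ik by (simp add: x_def)
      finally have 1: "?c * (\<Prod>l\<in>{..k}-{i}. x + real l) / D = ?c / (real i + real j + 1)" .
      have 2: "qc k i = (-1)^k * ?c" by (simp add: qc_def power_add)
      show ?thesis unfolding 1 2 by simp
    qed
  qed
  also have "\<dots> = (-1)^k * ((-1)^k * (\<Prod>i\<in>{1..k}. x - real i)) / D" unfolding interp by simp
  also have "\<dots> = (\<Prod>i\<in>{1..k}. x - real i) / D" by (simp add: power_mult_distrib[symmetric])
  finally have e: "(\<Sum>i\<le>k. qc k i / (real i + real j + 1)) = (\<Prod>i\<in>{1..k}. x - real i) / D" .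
  show ?thesis
  proof (cases "j < k")
    case True
    have "(\<Prod>i\<in>{1..k}. x - real i) = 0" using True unfolding x_def
      by (intro prod_zero bexI[of _ "j+1"]) auto
    then show ?thesis using e True by simp
  next
    case False
    then have jk: "j = k" using assms by simp
    have "(\<Prod>i\<in>{1..k}. x - real i) = fact k" unfolding x_def jk using rev_fact[of k] by (simp add: add.commute)
    moreover have "D = fact (2*k+1) / fact k" unfolding D_def x_def jk using Dval[of k] by (simp add: add.commute)
    ultimately show ?thesis using e False by (simp add: power2_eq_square)
  qed
qed


definition Q :: "nat \<Rightarrow> real \<Rightarrow> real" where
  "Q k t = (\<Sum>i\<le>k. qc k i * t^i)"

lemma intQmono:
  assumes "j \<le> k"
  shows "((\<lambda>t. Q k t * t^j) has_integral (if j < k then 0 else fact k ^ 2 / fact (2*k+1))) {0..1}"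
proof -
  have "((\<lambda>t. \<Sum>i\<le>k. qc k i * t^(i+j)) has_integral (\<Sum>i\<le>k. qc k i * (1 / (real (i+j) + 1)))) {0..1}"
    by (intro has_integral_sum has_integral_mult_right mono_int) auto
  moreover have "(\<lambda>t. \<Sum>i\<le>k. qc k i * t^(i+j)) = (\<lambda>t. Q k t * t^j)"
    by (auto simp: Q_def sum_distrib_right power_add mult.assoc)
  moreover have "(\<Sum>i\<le>k. qc k i * (1 / (real (i+j) + 1))) = (\<Sum>i\<le>k. qc k i / (real i + real j + 1))"
    by simp
  ultimately show ?thesis using frac[OF assms] by simp
qed

lemma qc_kk: "qc k k * (fact k ^ 2 / fact (2*k+1)) = 1 / (2 * real k + 1)"
proof -
  have "qc k k = real ((2*k) choose k)" by (simp add: qc_def mult_2)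
  also have "\<dots> = fact (2*k) / (fact k * fact k)" using binomial_fact[of k "2*k"] by (simp add: mult_2)
  finally have 1: "qc k k = fact (2*k) / (fact k * fact k)" .
  have 2: "fact (2*k+1) = (2 * real k + 1) * (fact (2*k) :: real)" by simp
  have 3: "(fact (2*k) :: real) > 0" "(fact k :: real) > 0" "2 * real k + 1 > 0" by auto
  have g: "a/(b*b)*(b^2/(c*a)) = 1/c" if "a > 0" "b > 0" "c > 0" for a b c :: real
    using that by (simp add: power2_eq_square field_simps)
  show ?thesis unfolding 1 2 using g[OF 3(1) 3(2) 3(3)] by simp
qed

lemma orth_le:
  assumes "m \<le> k"
  shows "((\<lambda>t. Q k t * Q m t) has_integral (if k = m then 1 / (2 * real k + 1) else 0)) {0..1}"
proof -
  have "((\<lambda>t. \<Sum>i\<le>m. qc m i * (Q k t * t^i)) has_integral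
        (\<Sum>i\<le>m. qc m i * (if i < k then 0 else fact k ^ 2 / fact (2*k+1)))) {0..1}"
    using assms by (intro has_integral_sum has_integral_mult_right intQmono) auto
  moreover have "(\<lambda>t. \<Sum>i\<le>m. qc m i * (Q k t * t^i)) = (\<lambda>t. Q k t * Q m t)"
    by (auto simp: Q_def sum_distrib_left sum_distrib_right ac_simps)
  moreover have "(\<Sum>i\<le>m. qc m i * (if i < k then 0 else fact k ^ 2 / fact (2*k+1)))
      = (if k = m then 1 / (2 * real k + 1) else 0)"
  proof (cases "k = m")
    case True
    have "(\<Sum>i\<le>m. qc m i * (if i < k then 0 else fact k ^ 2 / fact (2*k+1)))
        = qc k k * (fact k ^ 2 / fact (2*k+1))"
      using True by (subst sum.remove[of _ k]) (auto intro!: sum.neutral)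
    then show ?thesis using True qc_kk by simp
  next
    case False
    then show ?thesis using assms by (auto intro!: sum.neutral)
  qed
  ultimately show ?thesis by simp
qed

lemma orth:
  "((\<lambda>t. Q k t * Q m t) has_integral (if k = m then 1 / (2 * real k + 1) else 0)) {0..1}"
proof (cases "m \<le> k")
  case True then show ?thesis by (rule orth_le)
next
  case False
  then have "((\<lambda>t. Q m t * Q k t) has_integral (if m = k then 1 / (2 * real m + 1) else 0)) {0..1}"
    by (intro orth_le) auto
  then show ?thesis using False by (simp add: mult.commute)
qed


definition Sn :: "nat \<Rightarrow> real" where
  "Sn n = (\<Sum>k<n. real k ^ 2 * real (k + 1) ^ 2 * real (2 * k + 1))"
definition w :: "nat \<Rightarrow> real" where "w k = (2 * real k + 1) * qc k 1"
definition kap :: "nat \<Rightarrow> nat \<Rightarrow> real" where "kap n i = (\<Sum>k<n. w k * qc k i)"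
definition Kp :: "nat \<Rightarrow> real \<Rightarrow> real" where "Kp n t = (\<Sum>k<n. w k * Q k t)"

lemma m1sq: "((-1::real)^k)^2 = 1"
  by (induct k) auto

lemma qc1sq: "qc k (Suc 0) ^ 2 = real k ^ 2 * real (k+1) ^ 2"
proof -
  have "qc k (Suc 0) = (-1)^(k+1) * (real k * real (k+1))" by (simp add: qc_def)
  then show ?thesis by (simp add: power_mult_distrib m1sq)
qed

lemma qc10: "qc k (Suc 0) * qc k 0 = - (real k * real (k+1))"
proof -
  have "qc k (Suc 0) * qc k 0 = - (((-1)^k)^2 * (real k * real (k+1)))" by (simp add: qc_def power2_eq_square)
  then show ?thesis by (simp add: m1sq)
qed

lemma qc_big: "k < i \<Longrightarrow> qc k i = 0"
  by (simp add: qc_def)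

lemma Q_ext: "k < n \<Longrightarrow> Q k t = (\<Sum>i<n. qc k i * t^i)"
proof -
  assume kn: "k < n"
  have "(\<Sum>i<n. qc k i * t^i) = (\<Sum>i\<le>k. qc k i * t^i) + (\<Sum>i\<in>{..<n}-{..k}. qc k i * t^i)"
    using kn by (subst sum.subset_diff[of "{..k}"]) auto
  also have "(\<Sum>i\<in>{..<n}-{..k}. qc k i * t^i) = 0" by (intro sum.neutral) (auto simp: qc_big)
  finally show ?thesis by (simp add: Q_def)
qed

lemma Kpoly: "Kp n t = (\<Sum>i<n. kap n i * t^i)"
proof -
  have "Kp n t = (\<Sum>k<n. \<Sum>i<n. w k * (qc k i * t^i))"
    unfolding Kp_def by (intro sum.cong refl) (simp add: Q_ext sum_distrib_left)
  also have "\<dots> = (\<Sum>i<n. \<Sum>k<n. w k * (qc k i * t^i))" by (rule sum.swap)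
  also have "\<dots> = (\<Sum>i<n. kap n i * t^i)" by (simp add: kap_def sum_distrib_right mult.assoc)
  finally show ?thesis .
qed

lemma kap1: "kap n 1 = Sn n"
  unfolding kap_def Sn_def w_def
  by (intro sum.cong refl) (simp add: mult.assoc power2_eq_square[symmetric] qc1sq algebra_simps)

lemma kap0: assumes "n \<ge> 2" shows "kap n 0 \<le> -6"
proof -
  have e: "kap n 0 = (\<Sum>k<n. - ((2 * real k + 1) * (real k * real (k+1))))"
    unfolding kap_def w_def by (intro sum.cong refl) (simp add: mult.assoc qc10)
  have "(\<Sum>k<n. - ((2 * real k + 1) * (real k * real (k+1))))
      = - ((2 * real 1 + 1) * (real 1 * real (1+1))) + (\<Sum>k\<in>{..<n}-{1}. - ((2 * real k + 1) * (real k * real (k+1))))"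
    using assms by (subst sum.remove[of _ 1]) auto
  also have "(\<Sum>k\<in>{..<n}-{1}. - ((2 * real k + 1) * (real k * real (k+1)))) \<le> 0"
    by (intro sum_nonpos) auto
  finally show ?thesis unfolding e by simp
qed

lemma Kint: "((\<lambda>t. Kp n t ^ 2) has_integral Sn n) {0..1}"
proof -
  have "((\<lambda>t. \<Sum>k<n. \<Sum>m<n. w k * w m * (Q k t * Q m t)) has_integral
      (\<Sum>k<n. \<Sum>m<n. w k * w m * (if k = m then 1 / (2 * real k + 1) else 0))) {0..1}"
    by (intro has_integral_sum has_integral_mult_right orth) auto
  moreover have "(\<lambda>t. \<Sum>k<n. \<Sum>m<n. w k * w m * (Q k t * Q m t)) = (\<lambda>t. Kp n t ^ 2)"
    by (auto simp: Kp_def power2_eq_square sum_product ac_simps)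
  moreover have "(\<Sum>k<n. \<Sum>m<n. w k * w m * (if k = m then 1 / (2 * real k + 1) else 0)) = Sn n"
  proof -
    have "(\<Sum>k<n. \<Sum>m<n. w k * w m * (if k = m then 1 / (2 * real k + 1) else 0))
        = (\<Sum>k<n. w k * w k / (2 * real k + 1))"
      by (intro sum.cong refl) (simp add: if_distrib sum.delta cong: if_cong)
    also have "\<dots> = Sn n" unfolding Sn_def w_def
    proof (intro sum.cong refl)
      fix k
      have "(2 * real k + 1) * qc k 1 * ((2 * real k + 1) * qc k 1) / (2 * real k + 1)
          = (2 * real k + 1) * qc k 1 ^ 2" by (simp add: power2_eq_square)
      also have "\<dots> = real k ^ 2 * real (k + 1) ^ 2 * real (2 * k + 1)" by (simp add: qc1sq)
      finally show "(2 * real k + 1) * qc k 1 * ((2 * real k + 1) * qc k 1) / (2 * real k + 1) = real k ^ 2 * real (k + 1) ^ 2 * real (2 * k + 1)" .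
    qed
    finally show ?thesis .
  qed
  ultimately show ?thesis by simp
qed


lemma expand:
  fixes \<kappa> :: "nat \<Rightarrow> real" and c \<delta> t :: real and n :: nat
  assumes "\<delta> \<noteq> 0"
  defines "a \<equiv> (\<lambda>j. \<Sum>i<n. complex_of_real (\<kappa> i) / (\<i> * complex_of_real \<delta>)^i * of_nat (i choose j) * (-1)^(i-j))"
  shows "exp (\<i> * complex_of_real (c*t)) * (\<Sum>i<n. complex_of_real (\<kappa> i) * ((exp (\<i> * complex_of_real (\<delta>*t)) - 1) / (\<i> * complex_of_real \<delta>))^i)
       = (\<Sum>j<n. a j * exp (\<i> * complex_of_real ((c + real j * \<delta>) * t)))"
proof -
  define E where "E = exp (\<i> * complex_of_real (\<delta>*t))"
  define B where "B = \<i> * complex_of_real \<delta>"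
  define X where "X = exp (\<i> * complex_of_real (c*t))"
  have XE: "X * E^j = exp (\<i> * complex_of_real ((c + real j * \<delta>) * t))" for j
  proof -
    have "E^j = exp (of_nat j * (\<i> * complex_of_real (\<delta>*t)))" unfolding E_def by (rule exp_of_nat_mult[symmetric])
    then have "X * E^j = exp (\<i> * complex_of_real (c*t) + of_nat j * (\<i> * complex_of_real (\<delta>*t)))"
      unfolding X_def by (simp add: exp_add)
    also have "\<i> * complex_of_real (c*t) + of_nat j * (\<i> * complex_of_real (\<delta>*t)) = \<i> * complex_of_real ((c + real j * \<delta>) * t)"
      by (simp add: algebra_simps)
    finally show ?thesis .
  qed
  have pw: "((E - 1) / B)^i = (\<Sum>j<n. of_nat (i choose j) * E^j * (-1)^(i-j)) / B^i" if "i < n" for i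
  proof -
    have "(E - 1)^i = (E + (-1))^i" by simp
    also have "\<dots> = (\<Sum>j\<le>i. of_nat (i choose j) * E^j * (-1)^(i-j))" by (rule binomial_ring)
    also have "\<dots> = (\<Sum>j<n. of_nat (i choose j) * E^j * (-1)^(i-j))"
    proof -
      have "(\<Sum>j<n. of_nat (i choose j) * E^j * (-1)^(i-j)) = (\<Sum>j\<le>i. of_nat (i choose j) * E^j * (-1)^(i-j)) + (\<Sum>j\<in>{..<n}-{..i}. of_nat (i choose j) * E^j * (-1)^(i-j))"
        using that by (subst sum.subset_diff[of "{..i}"]) auto
      also have "(\<Sum>j\<in>{..<n}-{..i}. of_nat (i choose j) * E^j * (-1)^(i-j) :: complex) = 0" by (intro sum.neutral) auto
      finally show ?thesis by simp
    qed
    finally show ?thesis by (simp add: power_divide)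
  qed
  have "X * (\<Sum>i<n. complex_of_real (\<kappa> i) * ((E - 1) / B)^i)
      = (\<Sum>i<n. \<Sum>j<n. complex_of_real (\<kappa> i) / B^i * of_nat (i choose j) * (-1)^(i-j) * (X * E^j))"
    unfolding sum_distrib_left
    by (intro sum.cong refl) (simp add: pw sum_distrib_left sum_divide_distrib algebra_simps)
  also have "\<dots> = (\<Sum>j<n. \<Sum>i<n. complex_of_real (\<kappa> i) / B^i * of_nat (i choose j) * (-1)^(i-j) * (X * E^j))"
    by (rule sum.swap)
  also have "\<dots> = (\<Sum>j<n. a j * (X * E^j))"
    unfolding a_def B_def by (simp add: sum_distrib_right)
  finally show ?thesis unfolding XE by (simp add: X_def E_def B_def)
qed



lemma deriv0:
  fixes \<kappa> :: "nat \<Rightarrow> real" and c \<delta> :: real and n :: nat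
  assumes "n \<ge> 2" "\<delta> \<noteq> 0"
  shows "((\<lambda>z. exp (\<i> * complex_of_real c * z) * (\<Sum>i<n. complex_of_real (\<kappa> i) * ((exp (\<i> * complex_of_real \<delta> * z) - 1) / (\<i> * complex_of_real \<delta>))^i))
     has_field_derivative (\<i> * complex_of_real c * complex_of_real (\<kappa> 0) + complex_of_real (\<kappa> 1))) (at 0)"
proof -
  define B where "B = \<i> * complex_of_real \<delta>"
  have B0: "B \<noteq> 0" using assms by (simp add: B_def)
  define g where "g = (\<lambda>z. (exp (B * z) - 1) / B)"
  define Kc where "Kc = (\<lambda>w. \<Sum>i<n. complex_of_real (\<kappa> i) * w^i)"
  have dK: "(Kc has_field_derivative (\<Sum>i<n. complex_of_real (\<kappa> i) * (of_nat i * w^(i-1)))) (at w)" for w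
    unfolding Kc_def by (auto intro!: derivative_eq_intros sum.cong simp: ac_simps)
  have dg: "(g has_field_derivative 1) (at 0)" unfolding g_def using B0
    by (auto intro!: derivative_eq_intros)
  have g0: "g 0 = 0" by (simp add: g_def)
  have dKg: "((\<lambda>z. Kc (g z)) has_field_derivative (\<Sum>i<n. complex_of_real (\<kappa> i) * (of_nat i * 0^(i-1))) * 1) (at 0)"
    using DERIV_chain2[OF dK[of "g 0"] dg] unfolding g0 .
  have dX: "((\<lambda>z. exp (\<i> * complex_of_real c * z)) has_field_derivative \<i> * complex_of_real c) (at 0)"
    by (auto intro!: derivative_eq_intros)
  have s1: "(\<Sum>i<n. complex_of_real (\<kappa> i) * (of_nat i * 0^(i-1))) = complex_of_real (\<kappa> 1)"
  proof -
    have "(\<Sum>i<n. complex_of_real (\<kappa> i) * (of_nat i * 0^(i-1))) = (\<Sum>i<n. if i = 1 then complex_of_real (\<kappa> 1) else 0)"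
      by (intro sum.cong refl) (auto simp: power_0_left)
    also have "\<dots> = complex_of_real (\<kappa> 1)" using assms by (simp add: sum.delta)
    finally show ?thesis .
  qed
  have s0: "Kc 0 = complex_of_real (\<kappa> 0)"
  proof -
    have "Kc 0 = (\<Sum>i<n. if i = 0 then complex_of_real (\<kappa> 0) else 0)" unfolding Kc_def
      by (intro sum.cong refl) (auto simp: power_0_left)
    also have "\<dots> = complex_of_real (\<kappa> 0)" using assms by (simp add: sum.delta)
    finally show ?thesis .
  qed
  have "((\<lambda>z. exp (\<i> * complex_of_real c * z) * Kc (g z)) has_field_derivative
      exp (\<i> * complex_of_real c * 0) * (complex_of_real (\<kappa> 1) * 1) + \<i> * complex_of_real c * Kc (g 0)) (at 0)"
    using DERIV_mult[OF dX dKg] unfolding s1 by (simp add: algebra_simps)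
  then show ?thesis unfolding g0 s0 by (simp add: Kc_def g_def B_def algebra_simps)
qed


lemma ptbound:
  fixes \<kappa> :: "nat \<Rightarrow> real" and c \<delta> t :: real and n :: nat
  assumes d: "0 < \<delta>" "\<delta> \<le> 1" and t: "0 \<le> t" "t \<le> 1"
  shows "cmod (exp (\<i> * complex_of_real (c*t)) * (\<Sum>i<n. complex_of_real (\<kappa> i) * ((exp (\<i> * complex_of_real (\<delta>*t)) - 1) / (\<i> * complex_of_real \<delta>))^i))^2
     \<le> (\<Sum>i<n. \<kappa> i * t^i)^2 + (2 * (\<Sum>i<n. \<bar>\<kappa> i\<bar>) * (\<Sum>i<n. \<bar>\<kappa> i\<bar> * real i) * \<delta> + (\<Sum>i<n. \<bar>\<kappa> i\<bar> * real i)^2 * \<delta>^2)"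
proof -
  define L where "L = (\<Sum>i<n. \<bar>\<kappa> i\<bar> * real i)"
  define M where "M = (\<Sum>i<n. \<bar>\<kappa> i\<bar>)"
  define z where "z = (exp (\<i> * complex_of_real (\<delta>*t)) - 1) / (\<i> * complex_of_real \<delta>)"
  define P where "P = (\<Sum>i<n. \<kappa> i * t^i)"
  have L0: "L \<ge> 0" unfolding L_def by (intro sum_nonneg) auto
  have nB: "cmod (\<i> * complex_of_real \<delta>) = \<delta>" using d by (simp add: norm_mult)
  have a0: "cmod (iexp (\<delta>*t) - 1) \<le> \<delta> * t"
    using iexp_approx1[of "\<delta>*t" 0] d t by (simp add: abs_mult)
  have a1: "cmod (iexp (\<delta>*t) - (1 + \<i> * complex_of_real (\<delta>*t))) \<le> (\<delta>*t)^2 / 2"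
    using iexp_approx1[of "\<delta>*t" 1] d t by (simp add: power2_abs power2_eq_square)
  have zn: "cmod z \<le> 1"
  proof -
    have "cmod z = cmod (iexp (\<delta>*t) - 1) / \<delta>" unfolding z_def using nB by (simp add: norm_divide)
    also have "\<dots> \<le> (\<delta> * t) / \<delta>" using a0 d by (intro divide_right_mono) auto
    also have "\<dots> \<le> 1" using d t by simp
    finally show ?thesis .
  qed
  have zt: "cmod (z - complex_of_real t) \<le> \<delta>"
  proof -
    have "z - complex_of_real t = (iexp (\<delta>*t) - (1 + \<i> * complex_of_real (\<delta>*t))) / (\<i> * complex_of_real \<delta>)"
      unfolding z_def using d by (simp add: field_simps)
    then have "cmod (z - complex_of_real t) = cmod (iexp (\<delta>*t) - (1 + \<i> * complex_of_real (\<delta>*t))) / \<delta>"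
      using nB by (simp add: norm_divide)
    also have "\<dots> \<le> ((\<delta>*t)^2 / 2) / \<delta>" using a1 d by (intro divide_right_mono) auto
    also have "\<dots> = \<delta> * (t^2 / 2)" using d by (simp add: power2_eq_square)
    also have "\<dots> \<le> \<delta> * 1"
    proof -
      have "t^2 \<le> 1" using t by (simp add: power_le_one)
      then show ?thesis using d by (intro mult_left_mono) auto
    qed
    finally show ?thesis by simp
  qed
  have "cmod ((\<Sum>i<n. complex_of_real (\<kappa> i) * z^i) - complex_of_real P)
      = cmod (\<Sum>i<n. complex_of_real (\<kappa> i) * (z^i - complex_of_real t ^ i))"
    unfolding P_def by (simp add: sum_subtractf algebra_simps)
  also have "\<dots> \<le> (\<Sum>i<n. cmod (complex_of_real (\<kappa> i) * (z^i - complex_of_real t ^ i)))"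
    by (rule norm_sum)
  also have "\<dots> \<le> (\<Sum>i<n. \<bar>\<kappa> i\<bar> * real i * \<delta>)"
  proof (intro sum_mono)
    fix i
    have "cmod (z^i - complex_of_real t ^ i) \<le> real i * cmod (z - complex_of_real t)"
      using zn t by (intro norm_power_diff) auto
    also have "\<dots> \<le> real i * \<delta>" using zt by (intro mult_left_mono) auto
    finally have "cmod (z^i - complex_of_real t ^ i) \<le> real i * \<delta>" .
    then show "cmod (complex_of_real (\<kappa> i) * (z^i - complex_of_real t ^ i)) \<le> \<bar>\<kappa> i\<bar> * real i * \<delta>"
      by (simp add: norm_mult mult.assoc mult_left_mono)
  qed
  also have "\<dots> = L * \<delta>" unfolding L_def by (simp add: sum_distrib_right)
  finally have kd: "cmod ((\<Sum>i<n. complex_of_real (\<kappa> i) * z^i) - complex_of_real P) \<le> L * \<delta>" .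
  have PM: "\<bar>P\<bar> \<le> M"
  proof -
    have "\<bar>P\<bar> \<le> (\<Sum>i<n. \<bar>\<kappa> i * t^i\<bar>)" unfolding P_def by (rule sum_abs)
    also have "\<dots> \<le> M" unfolding M_def
    proof (intro sum_mono)
      fix i
      have "\<bar>t^i\<bar> \<le> 1" using t by (simp add: power_le_one)
      then show "\<bar>\<kappa> i * t^i\<bar> \<le> \<bar>\<kappa> i\<bar>" by (simp add: abs_mult mult_left_le)
    qed
    finally show ?thesis .
  qed
  have k1: "cmod (\<Sum>i<n. complex_of_real (\<kappa> i) * z^i) \<le> \<bar>P\<bar> + L * \<delta>"
    using kd norm_triangle_sub[of "\<Sum>i<n. complex_of_real (\<kappa> i) * z^i" "complex_of_real P"] by simp
  have ex1: "cmod (exp (\<i> * complex_of_real (c*t))) = 1" by simp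
  have "cmod (exp (\<i> * complex_of_real (c*t)) * (\<Sum>i<n. complex_of_real (\<kappa> i) * z^i))^2
      = cmod (\<Sum>i<n. complex_of_real (\<kappa> i) * z^i)^2" by (simp add: norm_mult)
  also have "\<dots> \<le> (\<bar>P\<bar> + L * \<delta>)^2" using k1 by (intro power_mono) auto
  also have "\<dots> = P^2 + 2 * \<bar>P\<bar> * L * \<delta> + L^2 * \<delta>^2" by (simp add: power2_eq_square algebra_simps)
  also have "\<dots> \<le> P^2 + 2 * M * L * \<delta> + L^2 * \<delta>^2"
    using PM L0 d by (simp add: mult_right_mono)
  finally show ?thesis unfolding z_def P_def L_def M_def by simp
qed


lemma target:
  assumes "n \<ge> 1"
  shows "(1 + eps_n n) * 3 powr (-1/2) * real n ^ 3 = sqrt (Sn n)"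
proof -
  have n0: "real n > 0" using assms by simp
  have e: "(-1/2::real) = - (1/2)" by simp
  have a: "(3::real) powr (-1/2) = inverse (sqrt 3)"
    unfolding e powr_minus by (subst powr_half_sqrt) auto
  have b: "real n powr (-3) = inverse (real n ^ 3)"
    using n0 by (simp add: powr_minus)
  have c: "1 + eps_n n = sqrt 3 * real n powr (-3) * sqrt (Sn n)"
    unfolding eps_n_def Sn_def by simp
  have d: "sqrt 3 * inverse (real n ^ 3) * sqrt (Sn n) * inverse (sqrt 3) * real n ^ 3 = sqrt (Sn n)"
    using n0 by (simp add: field_simps)
  show ?thesis unfolding c a b using d .
qed

lemma case1:
  fixes \<eta> :: real
  assumes "\<eta> > 0"
  shows "(SUP f \<in> Tn 1 \<eta> - {(\<lambda>t. 0)}. ereal (cmod (vector_derivative f (at 0)) / L2norm01 f)) \<ge> ereal 0"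
proof -
  define f where "f = expsum 1 (\<lambda>_. 1) (\<lambda>_. \<eta>/2)"
  have "f \<in> Tn 1 \<eta>" unfolding Tn_def f_def using assms
    by (auto intro!: exI[of _ "\<lambda>_. 1::complex"] exI[of _ "\<lambda>_. \<eta>/2"] simp: strict_mono_on_def)
  moreover have "f \<noteq> (\<lambda>t. 0)"
  proof
    assume "f = (\<lambda>t. 0)"
    then have "f 0 = 0" by simp
    then show False by (simp add: f_def expsum_def)
  qed
  ultimately have "f \<in> Tn 1 \<eta> - {(\<lambda>t. 0)}" by simp
  moreover have "ereal 0 \<le> ereal (cmod (vector_derivative f (at 0)) / L2norm01 f)"
  proof -
    have "integral {0..1} (\<lambda>t. cmod (f t)^2) \<ge> 0"
      by (cases "(\<lambda>t. cmod (f t)^2) integrable_on {0..1}") (auto intro: integral_nonneg simp: not_integrable_integral)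
    then show ?thesis by (simp add: L2norm01_def)
  qed
  ultimately show ?thesis
    using SUP_upper2[of f "Tn 1 \<eta> - {(\<lambda>t. 0)}" "ereal 0" "\<lambda>g. ereal (cmod (vector_derivative g (at 0)) / L2norm01 g)"]
    by simp
qed


lemma Sn_pos: "n \<ge> 2 \<Longrightarrow> Sn n \<ge> 12"
proof -
  assume n: "n \<ge> 2"
  have "real 1 ^ 2 * real (1 + 1) ^ 2 * real (2 * 1 + 1) \<le> Sn n"
    unfolding Sn_def using n by (intro member_le_sum[of 1 "{..<n}"]) auto
  then show ?thesis by simp
qed

lemma case2:
  fixes \<eta> :: real and n :: nat
  assumes n: "n \<ge> 2" and eta: "\<eta> > 0"
  shows "(SUP f \<in> Tn n \<eta> - {(\<lambda>t. 0)}. ereal (cmod (vector_derivative f (at 0)) / L2norm01 f)) \<ge> ereal (sqrt (Sn n))"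
proof -
  define S where "S = Sn n"
  define \<kappa> where "\<kappa> = kap n"
  define c where "c = \<eta> / 2"
  have S12: "S \<ge> 12" unfolding S_def using Sn_pos[OF n] .
  have k0: "\<kappa> 0 \<le> -6" unfolding \<kappa>_def using kap0[OF n] .
  have k1: "\<kappa> 1 = S" unfolding \<kappa>_def S_def by (rule kap1)
  have c0: "c > 0" using eta by (simp add: c_def)
  define \<epsilon> where "\<epsilon> = c^2 * (\<kappa> 0)^2 / S"
  have eps0: "\<epsilon> > 0" unfolding \<epsilon>_def using S12 c0 k0 by (intro divide_pos_pos mult_pos_pos) auto
  define L where "L = (\<Sum>i<n. \<bar>\<kappa> i\<bar> * real i)"
  define M where "M = (\<Sum>i<n. \<bar>\<kappa> i\<bar>)"
  have L0: "L \<ge> 0" unfolding L_def by (intro sum_nonneg) auto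
  have M0: "M \<ge> 0" unfolding M_def by (intro sum_nonneg) auto
  define \<delta> where "\<delta> = min 1 (min (\<eta> / (2 * real n)) (\<epsilon> / (2*M*L + L^2 + 1)))"
  have den: "2*M*L + L^2 + 1 > 0" using L0 M0 by (simp add: add_nonneg_pos)
  have d0: "\<delta> > 0" unfolding \<delta>_def using eta n eps0 den by auto
  have d1: "\<delta> \<le> 1" unfolding \<delta>_def by simp
  have dn: "\<delta> * real n \<le> \<eta> / 2"
  proof -
    have "\<delta> \<le> \<eta> / (2 * real n)" unfolding \<delta>_def by simp
    then have "\<delta> * real n \<le> \<eta> / (2 * real n) * real n" using n by (intro mult_right_mono) auto
    also have "\<dots> = \<eta> / 2" using n by simp
    finally show ?thesis .
  qed
  define C where "C = 2 * M * L * \<delta> + L^2 * \<delta>^2"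
  have Ce: "C \<le> \<epsilon>"
  proof -
    have "\<delta>^2 \<le> \<delta>" using d0 d1 by (simp add: power2_eq_square mult_left_le)
    then have "L^2 * \<delta>^2 \<le> L^2 * \<delta>" by (intro mult_left_mono) auto
    then have "C \<le> (2*M*L + L^2) * \<delta>" unfolding C_def by (simp add: algebra_simps)
    also have "\<dots> \<le> (2*M*L + L^2 + 1) * \<delta>" using d0 by simp
    also have "\<dots> \<le> \<epsilon>"
    proof -
      have "\<delta> \<le> \<epsilon> / (2*M*L + L^2 + 1)" unfolding \<delta>_def by simp
      then show ?thesis using den by (simp add: field_simps)
    qed
    finally show ?thesis .
  qed
  define lam where "lam = (\<lambda>j::nat. c + real j * \<delta>)"
  define a where "a = (\<lambda>j. \<Sum>i<n. complex_of_real (\<kappa> i) / (\<i> * complex_of_real \<delta>)^i * of_nat (i choose j) * (-1)^(i-j))"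
  define f where "f = expsum n a lam"
  define F where "F = (\<lambda>z. exp (\<i> * complex_of_real c * z) * (\<Sum>i<n. complex_of_real (\<kappa> i) * ((exp (\<i> * complex_of_real \<delta> * z) - 1) / (\<i> * complex_of_real \<delta>))^i))"
  have feq: "f t = exp (\<i> * complex_of_real (c*t)) * (\<Sum>i<n. complex_of_real (\<kappa> i) * ((exp (\<i> * complex_of_real (\<delta>*t)) - 1) / (\<i> * complex_of_real \<delta>))^i)" for t
    unfolding f_def expsum_def lam_def a_def using expand[where \<kappa>=\<kappa> and c=c and \<delta>=\<delta> and n=n and t=t] d0 by simp
  have fF: "f = (\<lambda>t. F (complex_of_real t))"
    by (rule ext) (simp add: feq F_def mult.assoc)
  have fT: "f \<in> Tn n \<eta>"
    unfolding Tn_def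
  proof (intro CollectI exI conjI)
    show "strict_mono_on {..<n} lam" unfolding lam_def using d0
      by (intro strict_mono_onI) (auto intro!: mult_strict_right_mono)
    show "\<forall>j<n. 0 < lam j \<and> lam j < \<eta>"
    proof (intro allI impI conjI)
      fix j assume j: "j < n"
      show "0 < lam j" unfolding lam_def using c0 d0 by (simp add: add_pos_nonneg)
      have "real j * \<delta> < real n * \<delta>" using j d0 by (intro mult_strict_right_mono) auto
      then show "lam j < \<eta>" unfolding lam_def c_def using dn by (simp add: mult.commute)
    qed
    show "f = expsum n a lam" by (simp add: f_def)
  qed
  define D where "D = \<i> * complex_of_real c * complex_of_real (\<kappa> 0) + complex_of_real (\<kappa> 1)"
  have dF: "(F has_field_derivative D) (at 0)" unfolding F_def D_def
    using deriv0[where \<kappa>=\<kappa> and c=c and \<delta>=\<delta> and n=n] n d0 by simp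
  have "(f has_vector_derivative D) (at 0)"
    unfolding fF using has_vector_derivative_real_field[of F D 0 UNIV] dF by simp
  then have vd: "vector_derivative f (at 0) = D" by (rule vector_derivative_at)
  have D2: "cmod D ^ 2 = S^2 + c^2 * (\<kappa> 0)^2"
  proof -
    have "D = Complex S (c * \<kappa> 0)" unfolding D_def k1 by (simp add: complex_eq_iff)
    then show ?thesis by (simp add: cmod_power2 power_mult_distrib)
  qed
  have f0: "f 0 = complex_of_real (\<kappa> 0)"
  proof -
    have "f 0 = (\<Sum>i<n. complex_of_real (\<kappa> i) * 0^i)" unfolding feq by simp
    also have "\<dots> = (\<Sum>i<n. if i = 0 then complex_of_real (\<kappa> 0) else 0)"
      by (intro sum.cong refl) (auto simp: power_0_left)
    also have "\<dots> = complex_of_real (\<kappa> 0)" using n by (simp add: sum.delta)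
    finally show ?thesis .
  qed
  have fne: "f \<noteq> (\<lambda>t. 0)"
  proof
    assume "f = (\<lambda>t. 0)"
    then have "f 0 = 0" by simp
    then show False using f0 k0 by simp
  qed
  define I where "I = integral {0..1} (\<lambda>t. cmod (f t)^2)"
  have contf: "continuous_on {0..1} (\<lambda>t. cmod (f t)^2)"
    unfolding feq using d0 by (intro continuous_intros) auto
  have intf: "(\<lambda>t. cmod (f t)^2) integrable_on {0..1}"
    by (rule integrable_continuous_interval[OF contf])
  have gint: "((\<lambda>t. Kp n t ^ 2 + C) has_integral (S + C)) {0..1}"
  proof -
    have "((\<lambda>t::real. C) has_integral C) {0..1}" using has_integral_const_real[of C 0 1] by simp
    then show ?thesis using Kint[of n] unfolding S_def by (intro has_integral_add) auto
  qed
  have IS: "I \<le> S + C"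
  proof -
    have "I \<le> integral {0..1} (\<lambda>t. Kp n t ^ 2 + C)"
      unfolding I_def
    proof (rule integral_le[OF intf])
      show "(\<lambda>t. Kp n t ^ 2 + C) integrable_on {0..1}" using gint by blast
      fix t :: real assume "t \<in> {0..1}"
      then show "cmod (f t)^2 \<le> Kp n t ^ 2 + C"
        unfolding feq Kpoly C_def L_def M_def \<kappa>_def using ptbound[where \<kappa>="kap n" and c=c and \<delta>=\<delta> and n=n and t=t] d0 d1 by auto
    qed
    also have "\<dots> = S + C" using gint by (rule integral_unique)
    finally show ?thesis .
  qed
  have Ipos: "I > 0"
  proof -
    have "I \<ge> 0" unfolding I_def by (intro integral_nonneg intf) auto
    moreover have "I \<noteq> 0"
    proof
      assume "I = 0"
      then have "\<forall>x\<in>{0..1}. cmod (f x)^2 = 0" unfolding I_def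
        using integral_eq_0_iff[OF contf] by auto
      then have "cmod (f 0)^2 = 0" by auto
      then show False using f0 k0 by simp
    qed
    ultimately show ?thesis by simp
  qed
  have ratio: "sqrt S \<le> cmod D / sqrt I"
  proof -
    have SI: "S * I \<le> S * (S + \<epsilon>)" using IS Ce S12 by (intro mult_left_mono) auto
    have "S * (S + \<epsilon>) = cmod D ^ 2" unfolding D2 \<epsilon>_def using S12 by (simp add: field_simps power2_eq_square)
    then have "S * I \<le> cmod D ^ 2" using SI by simp
    then have "sqrt (S * I) \<le> sqrt (cmod D ^ 2)" by (rule real_sqrt_le_mono)
    then have "sqrt (S * I) \<le> cmod D" by simp
    then have "sqrt S * sqrt I \<le> cmod D" by (simp add: real_sqrt_mult)
    then show ?thesis using Ipos by (simp add: pos_le_divide_eq)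
  qed
  have mem: "f \<in> Tn n \<eta> - {(\<lambda>t. 0)}" using fT fne by simp
  have "ereal (sqrt S) \<le> ereal (cmod (vector_derivative f (at 0)) / L2norm01 f)"
    using ratio unfolding vd L2norm01_def I_def[symmetric] by simp
  then show ?thesis
    using SUP_upper2[of f "Tn n \<eta> - {(\<lambda>t. 0)}" "ereal (sqrt S)" "\<lambda>g. ereal (cmod (vector_derivative g (at 0)) / L2norm01 g)"] mem
    unfolding S_def by simp
qed


theorem theorem5p3:
  fixes n :: nat and \<eta> :: real
  assumes "n \<ge> 1" and "\<eta> > 0"
  shows "(SUP f \<in> Tn n \<eta> - {(\<lambda>t. 0)}.
            ereal (cmod (vector_derivative f (at 0)) / L2norm01 f))
         \<ge> ereal ((1 + eps_n n) * 3 powr (-1/2) * real n ^ 3)"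
proof (cases "n = 1")
  case True
  have "Sn 1 = 0" by (simp add: Sn_def)
  then have "(1 + eps_n n) * 3 powr (-1/2) * real n ^ 3 = 0" using target[OF assms(1)] True by simp
  then show ?thesis using case1[OF assms(2)] True by simp
next
  case False
  then have "n \<ge> 2" using assms(1) by simp
  then show ?thesis using case2[OF _ assms(2)] target[OF assms(1)] by simp
qed

end
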